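(* Let $\overline{G}_n=\overline{H}_0\overline{H}_1\cdots\overline{H}_{n-1}$ be a polyphenyl hexagonal chain with $n$ hexagons and let $t_k$ be the tail vertex (in $\overline{H}_{k-1}$) of the cut-edge attaching $\overline{H}_k$, $1\le k\le n-1$. Then $$W(\overline{G}_n)=6\sum_{k=1}^{n-1}\sum_{i=1}^{k}g(t_i)+45n^2-18n=6\sum_{k=1}^{n-1}(n-k)g(t_k)+45n^2-18n,$$ where $g(t_1)=9$ and, for $k\ge2$, $g(t_k)=12(k-1)+9$ if $t_k$ is $o_{k-1}$, $g(t_k)=18(k-1)+9$ if $t_k$ is $m_{k-1}$, and $g(t_k)=24(k-1)+9$ if $t_k$ is $p_{k-1}$.
   Context: All graphs are simple and connected; the Wiener index is $W(G)=\sum_{\{u,v\}\subseteq V(G)}d_G(u,v)$ with $d_G$ the shortest-path distance. A polyphenyl hexagonal chain $\overline{G}_n=\overline{H}_0\overline{H}_1\cdots\overline{H}_{n-1}$ of length $n$ consists of pairwise vertex-disjoint hexagons (6-cycles) $\overline{H}_0,\dots,\overline{H}_{n-1}$ together with cut-edges: $\overline{G}_1=\overline{H}_0$, and for $k\ge1$, $\overline{G}_{k+1}$ is obtained from $\overline{G}_k$ by adding $\overline{H}_k$ and a cut-edge joining a vertex $c_k$ of $\overline{H}_k$ to a vertex $t_k$ of $\overline{H}_{k-1}$ (the tail), where for $k\ge2$, $t_k\ne c_{k-1}$. For $k\ge1$, a vertex of $\overline{H}_k$ at distance $1$, $2$, $3$ from $c_k$ is an ortho-, meta-, para-vertex of $\overline{H}_k$,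 denoted $o_k,m_k,p_k$; thus for $k\ge2$, $t_k$ is one of $o_{k-1},m_{k-1},p_{k-1}$. *)

theory Defs
  imports Main
begin

text \<open>A graph is given by a vertex set V and a symmetric edge relation E
  (edges only between vertices of V).\<close>

definition walk_betw :: "('a \<Rightarrow> 'a \<Rightarrow> bool) \<Rightarrow> 'a \<Rightarrow> 'a list \<Rightarrow> 'a \<Rightarrow> bool" where
  "walk_betw E u p v \<longleftrightarrow> p \<noteq> [] \<and> hd p = u \<and> last p = v \<and>
     (\<forall>i. Suc i < length p \<longrightarrow> E (p ! i) (p ! Suc i))"

definition gdist :: "('a \<Rightarrow> 'a \<Rightarrow> bool) \<Rightarrow> 'a \<Rightarrow> 'a \<Rightarrow> nat" where
  "gdist E u v = (LEAST k. \<exists>p. walk_betw E u p v \<and> length p = Suc k)"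

definition wiener :: "'a set \<Rightarrow> ('a \<Rightarrow> 'a \<Rightarrow> bool) \<Rightarrow> nat" where
  "wiener V E = (\<Sum>(u, v) \<in> {(u, v). u \<in> V \<and> v \<in> V \<and> u \<noteq> v}. gdist E u v) div 2"

text \<open>Vertex (k, j): the vertex at cyclic position j (0..5) of hexagon H_k.
  c k: position of c_k in H_k; t k: position of the tail t_k in H_(k-1) (k \<ge> 1).\<close>

definition pc_verts :: "nat \<Rightarrow> (nat \<times> nat) set" where
  "pc_verts n = {(k, j). k < n \<and> j < 6}"

definition pc_edge :: "nat \<Rightarrow> (nat \<Rightarrow> nat) \<Rightarrow> (nat \<Rightarrow> nat) \<Rightarrow> nat \<times> nat \<Rightarrow> nat \<times> nat \<Rightarrow> bool" where
  "pc_edge n c t u v \<longleftrightarrow> u \<in> pc_verts n \<and> v \<in> pc_verts n \<and>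
     ((fst u = fst v \<and> (snd v = (snd u + 1) mod 6 \<or> snd u = (snd v + 1) mod 6))
      \<or> (\<exists>k. 1 \<le> k \<and> k < n \<and>
            ((u = (k, c k) \<and> v = (k - 1, t k)) \<or> (v = (k, c k) \<and> u = (k - 1, t k)))))"

definition pc_valid :: "nat \<Rightarrow> (nat \<Rightarrow> nat) \<Rightarrow> (nat \<Rightarrow> nat) \<Rightarrow> bool" where
  "pc_valid n c t \<longleftrightarrow> (\<forall>k. 1 \<le> k \<and> k < n \<longrightarrow> c k < 6 \<and> t k < 6) \<and>
     (\<forall>k. 2 \<le> k \<and> k < n \<longrightarrow> t k \<noteq> c (k - 1))"

definition hex_dist :: "nat \<Rightarrow> nat \<Rightarrow> nat" where
  "hex_dist a b = min ((a + 6 - b) mod 6) ((b + 6 - a) mod 6)"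

definition is_ortho :: "(nat \<Rightarrow> nat) \<Rightarrow> (nat \<Rightarrow> nat) \<Rightarrow> nat \<Rightarrow> bool" where
  "is_ortho c t k \<longleftrightarrow> hex_dist (c (k - 1)) (t k) = 1"
definition is_meta :: "(nat \<Rightarrow> nat) \<Rightarrow> (nat \<Rightarrow> nat) \<Rightarrow> nat \<Rightarrow> bool" where
  "is_meta c t k \<longleftrightarrow> hex_dist (c (k - 1)) (t k) = 2"
definition is_para :: "(nat \<Rightarrow> nat) \<Rightarrow> (nat \<Rightarrow> nat) \<Rightarrow> nat \<Rightarrow> bool" where
  "is_para c t k \<longleftrightarrow> hex_dist (c (k - 1)) (t k) = 3"

definition gt :: "(nat \<Rightarrow> nat) \<Rightarrow> (nat \<Rightarrow> nat) \<Rightarrow> nat \<Rightarrow> nat" where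
  "gt c t k = (if k = 1 then 9
     else if is_ortho c t k then 12 * (k - 1) + 9
     else if is_meta c t k then 18 * (k - 1) + 9
     else if is_para c t k then 24 * (k - 1) + 9
     else 0)"

end

theory Submission
  imports Defs
begin

definition hd6 :: "nat \<Rightarrow> nat \<Rightarrow> nat" where
  "hd6 x y = hex_dist (x mod 6) (y mod 6)"

lemma six_cases: "(x::nat) < 6 \<Longrightarrow> x = 0 \<or> x = 1 \<or> x = 2 \<or> x = 3 \<or> x = 4 \<or> x = 5" by auto

lemma tri_all: "\<forall>x\<in>set [0..<6]. \<forall>y\<in>set [0..<6]. \<forall>z\<in>set [0..<6]. hex_dist x z \<le> hex_dist x y + hex_dist y z"
  unfolding hex_dist_def by code_simp

lemma hex_tri: "x < 6 \<Longrightarrow> y < 6 \<Longrightarrow> z < 6 \<Longrightarrow> hex_dist x z \<le> hex_dist x y + hex_dist y z"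
  using tri_all by simp

lemma hd6_tri: "hd6 x z \<le> hd6 x y + hd6 y z"
  unfolding hd6_def by (rule hex_tri) auto

lemma sym_all: "\<forall>x\<in>set [0..<6]. \<forall>y\<in>set [0..<6]. hex_dist x y = hex_dist y x
   \<and> (hex_dist x y = 0 \<longrightarrow> x = y)
   \<and> (x \<noteq> y \<longrightarrow> hex_dist x y = 1 \<or> hex_dist x y = 2 \<or> hex_dist x y = 3)
   \<and> (x \<noteq> y \<longrightarrow> hex_dist ((x+1) mod 6) y + 1 = hex_dist x y \<or> hex_dist ((x+5) mod 6) y + 1 = hex_dist x y)
   \<and> (y = (x+1) mod 6 \<or> x = (y+1) mod 6 \<longrightarrow> hex_dist x y \<le> 1)"
  unfolding hex_dist_def by code_simp

lemma sum_all: "\<forall>x\<in>set [0..<6]. x = ((x+5) mod 6 + 1) mod 6 \<and>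
   hex_dist x 0 + hex_dist x 1 + hex_dist x 2 + hex_dist x 3 + hex_dist x 4 + hex_dist x 5 = 9"
  unfolding hex_dist_def by code_simp

lemma sym_fact: assumes "x < 6" "y < 6" shows "hex_dist x y = hex_dist y x
   \<and> (hex_dist x y = 0 \<longrightarrow> x = y)
   \<and> (x \<noteq> y \<longrightarrow> hex_dist x y = 1 \<or> hex_dist x y = 2 \<or> hex_dist x y = 3)
   \<and> (x \<noteq> y \<longrightarrow> hex_dist ((x+1) mod 6) y + 1 = hex_dist x y \<or> hex_dist ((x+5) mod 6) y + 1 = hex_dist x y)
   \<and> (y = (x+1) mod 6 \<or> x = (y+1) mod 6 \<longrightarrow> hex_dist x y \<le> 1)"
proof -
  have "x \<in> set [0..<6]" "y \<in> set [0..<6]" using assms by auto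
  from bspec[OF bspec[OF sym_all this(1)] this(2)] show ?thesis .
qed

lemma hex_sym: "x < 6 \<Longrightarrow> y < 6 \<Longrightarrow> hex_dist x y = hex_dist y x"
  using sym_fact by simp

lemma hd6_sym: "hd6 x y = hd6 y x"
  unfolding hd6_def by (rule hex_sym) auto

lemma hd6_refl[simp]: "hd6 x x = 0"
  unfolding hd6_def hex_dist_def by simp

lemma hd6_lt: "x < 6 \<Longrightarrow> y < 6 \<Longrightarrow> hd6 x y = hex_dist x y"
  unfolding hd6_def by simp

lemma hex_zero: "x < 6 \<Longrightarrow> y < 6 \<Longrightarrow> hex_dist x y = 0 \<Longrightarrow> x = y"
  using sym_fact by simp

lemma hex_123: "x < 6 \<Longrightarrow> y < 6 \<Longrightarrow> x \<noteq> y \<Longrightarrow> hex_dist x y = 1 \<or> hex_dist x y = 2 \<or> hex_dist x y = 3"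
  using sym_fact by simp

lemma hex_sum: "z < 6 \<Longrightarrow> (\<Sum>y<6. hex_dist z y) = 9"
proof -
  assume "z < 6"
  then have "hex_dist z 0 + hex_dist z 1 + hex_dist z 2 + hex_dist z 3 + hex_dist z 4 + hex_dist z 5 = 9"
    using sum_all by simp
  moreover have "(\<Sum>y<6. hex_dist z y) = hex_dist z 0 + hex_dist z 1 + hex_dist z 2 + hex_dist z 3 + hex_dist z 4 + hex_dist z 5"
    by (simp add: numeral_eq_Suc lessThan_Suc)
  ultimately show ?thesis by simp
qed

lemma hd6_sum: "(\<Sum>y<6. hd6 z y) = 9"
proof -
  have "(\<Sum>y<6. hd6 z y) = (\<Sum>y<6. hex_dist (z mod 6) y)"
    by (rule sum.cong) (auto simp: hd6_def)
  thus ?thesis using hex_sum[of "z mod 6"] by simp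
qed

lemma hex_step: "x < 6 \<Longrightarrow> y < 6 \<Longrightarrow> x \<noteq> y \<Longrightarrow>
   \<exists>x'. x' < 6 \<and> (x' = (x+1) mod 6 \<or> x = (x'+1) mod 6) \<and> hd6 x' y + 1 = hd6 x y"
proof -
  assume a: "x < 6" "y < 6" "x \<noteq> y"
  have five: "x = ((x+5) mod 6 + 1) mod 6" using sum_all a by simp
  have "hex_dist ((x+1) mod 6) y + 1 = hex_dist x y \<or> hex_dist ((x+5) mod 6) y + 1 = hex_dist x y"
    using sym_fact[OF a(1,2)] a(3) by blast
  then show ?thesis
  proof
    assume h: "hex_dist ((x+1) mod 6) y + 1 = hex_dist x y"
    show ?thesis by (rule exI[of _ "(x+1) mod 6"]) (use h a in \<open>simp add: hd6_lt\<close>)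
  next
    assume h: "hex_dist ((x+5) mod 6) y + 1 = hex_dist x y"
    show ?thesis by (rule exI[of _ "(x+5) mod 6"]) (use h a five in \<open>simp add: hd6_lt\<close>)
  qed
qed

lemma ring_hd: "x < 6 \<Longrightarrow> x' < 6 \<Longrightarrow> (x' = (x+1) mod 6 \<or> x = (x'+1) mod 6) \<Longrightarrow> hd6 x x' \<le> 1"
  using sym_fact[of x x'] by (simp add: hd6_lt)

primrec F :: "(nat \<Rightarrow> nat) \<Rightarrow> (nat \<Rightarrow> nat) \<Rightarrow> nat \<Rightarrow> nat \<Rightarrow> nat \<Rightarrow> nat \<Rightarrow> nat" where
  "F c t a x 0 y = hd6 x y"
| "F c t a x (Suc d) y = F c t a x d (t (a + Suc d)) + 1 + hd6 (c (a + Suc d)) y"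

definition D :: "(nat \<Rightarrow> nat) \<Rightarrow> (nat \<Rightarrow> nat) \<Rightarrow> nat \<times> nat \<Rightarrow> nat \<times> nat \<Rightarrow> nat" where
  "D c t u v = (if fst u \<le> fst v then F c t (fst u) (snd u) (fst v - fst u) (snd v)
                else F c t (fst v) (snd v) (fst u - fst v) (snd u))"

lemma F_first: "F c t a x (Suc d) y = hd6 x (t (Suc a)) + 1 + F c t (Suc a) (c (Suc a)) d y"
  by (induction d arbitrary: y) auto

lemma F_tri_last: "F c t a x d y \<le> F c t a x d y' + hd6 y' y"
proof (cases d)
  case 0
  then show ?thesis using hd6_tri[where x=x and y=y' and z=y] by simp
next
  case (Suc e)
  then show ?thesis using hd6_tri[where x="c (a + Suc e)" and y=y' and z=y] by simp
qed

lemma F_tri_first: "F c t a x d y \<le> F c t a x' d y + hd6 x x'"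
proof (induction d arbitrary: y)
  case 0
  then show ?case using hd6_tri[where x=x and y=x' and z=y] by simp
next
  case (Suc d)
  then show ?case by (simp add: Suc.IH)
qed

lemma D_refl[simp]: "D c t v v = 0"
  by (simp add: D_def)

lemma D_sym: "D c t u v = D c t v u"
  by (auto simp: D_def hd6_sym)

lemma D_ring: "fst u = fst w \<Longrightarrow> D c t u v \<le> D c t w v + hd6 (snd u) (snd w)"
  unfolding D_def using F_tri_first F_tri_last hd6_sym by auto

lemma D_cut:
  assumes "1 \<le> k"
  shows "(k \<le> fst v \<and> D c t (k-1, t k) v = D c t (k, c k) v + 1)
       \<or> (fst v < k \<and> D c t (k, c k) v = D c t (k-1, t k) v + 1)"
proof -
  obtain a where k: "k = Suc a" using assms by (cases k) auto
  obtain b y where v: "v = (b, y)" by (cases v)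
  show ?thesis
  proof (cases "k \<le> b")
    case True
    have e: "b - a = Suc (b - Suc a)" using True k by simp
    have "D c t (k-1, t k) v = F c t a (t (Suc a)) (Suc (b - Suc a)) y"
      using True k v e by (simp add: D_def del: F.simps)
    also have "\<dots> = 1 + F c t (Suc a) (c (Suc a)) (b - Suc a) y"
      by (simp only: F_first hd6_refl)
    also have "F c t (Suc a) (c (Suc a)) (b - Suc a) y = D c t (k, c k) v"
      using True k v by (simp add: D_def)
    finally have "D c t (k-1, t k) v = D c t (k, c k) v + 1" by simp
    then show ?thesis using True v by simp
  next
    case False
    have e: "Suc a - b = Suc (a - b)" "b + Suc (a - b) = Suc a" using False k by auto
    have "D c t (k, c k) v = D c t (k-1, t k) v + 1"
    proof (cases "a = b")
      case True
      then show ?thesis using k v by (simp add: D_def hd6_sym)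
    next
      case False
      have ba: "b < a" "\<not> Suc a \<le> b" "\<not> a \<le> b" using False \<open>\<not> k \<le> b\<close> k by auto
      have "D c t (k, c k) v = F c t b y (Suc (a - b)) (c (Suc a))"
        using k v ba e by (simp add: D_def del: F.simps)
      also have "\<dots> = F c t b y (a - b) (t (Suc a)) + 1"
        using e by simp
      also have "F c t b y (a - b) (t (Suc a)) = D c t (k-1, t k) v"
        using k v ba by (simp add: D_def)
      finally show ?thesis .
    qed
    then show ?thesis using False v by simp
  qed
qed

lemma edge_lip:
  assumes "pc_edge n c t u w"
  shows "D c t u v \<le> D c t w v + 1"
proof -
  from assms have uv: "u \<in> pc_verts n" "w \<in> pc_verts n" unfolding pc_edge_def by auto
  from assms consider
    (ring) "fst u = fst w" "snd w = (snd u + 1) mod 6 \<or> snd u = (snd w + 1) mod 6"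
  | (cut) k where "1 \<le> k" "(u = (k, c k) \<and> w = (k - 1, t k)) \<or> (w = (k, c k) \<and> u = (k - 1, t k))"
    unfolding pc_edge_def by blast
  then show ?thesis
  proof cases
    case ring
    have "snd u < 6" "snd w < 6" using uv by (auto simp: pc_verts_def)
    then have "hd6 (snd u) (snd w) \<le> 1" using ring(2) ring_hd by blast
    then show ?thesis using D_ring[OF ring(1), of c t v] by simp
  next
    case cut
    then show ?thesis using D_cut[OF cut(1), where c=c and t=t and v=v] by auto
  qed
qed

lemma walk_lower:
  assumes "\<And>a b. E a b \<Longrightarrow> f a \<le> f b + 1" "f v = (0::nat)"
  shows "walk_betw E u p v \<Longrightarrow> f u \<le> length p - 1"
proof (induction p arbitrary: u)
  case Nil
  then show ?case by (simp add: walk_betw_def)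
next
  case (Cons a p)
  then have au: "a = u" by (simp add: walk_betw_def)
  show ?case
  proof (cases p)
    case Nil
    then show ?thesis using Cons.prems assms(2) au by (auto simp: walk_betw_def)
  next
    case (Cons w rest)
    have e: "E u w" using Cons.prems \<open>p = w # rest\<close> au unfolding walk_betw_def
      by (metis length_Cons nth_Cons_0 nth_Cons_Suc zero_less_Suc Suc_less_eq)
    have "walk_betw E w p v" unfolding walk_betw_def
    proof (intro conjI allI impI)
      show "p \<noteq> []" "hd p = w" using Cons by auto
      show "last p = v" using Cons.prems \<open>p = w # rest\<close> by (simp add: walk_betw_def)
      fix i assume "Suc i < length p"
      then show "E (p ! i) (p ! Suc i)" using Cons.prems unfolding walk_betw_def
        by (metis Suc_less_eq length_Cons nth_Cons_Suc)
    qed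
    then have "f w \<le> length p - 1" using Cons.IH by blast
    then show ?thesis using assms(1)[OF e] \<open>p = w # rest\<close> by simp
  qed
qed

lemma walk_exists:
  assumes "\<And>a. a \<in> V \<Longrightarrow> f a \<noteq> 0 \<Longrightarrow> \<exists>b\<in>V. E a b \<and> f b + 1 = f a"
    and "\<And>a. a \<in> V \<Longrightarrow> f a = (0::nat) \<Longrightarrow> a = v"
  shows "u \<in> V \<Longrightarrow> \<exists>p. walk_betw E u p v \<and> length p = Suc (f u)"
proof (induction "f u" arbitrary: u)
  case 0
  then have "u = v" using assms(2) by simp
  then show ?case using 0 by (intro exI[of _ "[u]"]) (simp add: walk_betw_def)
next
  case (Suc m)
  then obtain b where b: "b \<in> V" "E u b" "f b + 1 = f u" using assms(1) by force
  then have "m = f b" using Suc.hyps by simp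
  then obtain p where p: "walk_betw E b p v" "length p = Suc (f b)" using Suc.hyps b by blast
  have "walk_betw E u (u # p) v" unfolding walk_betw_def
  proof (intro conjI allI impI)
    show "u # p \<noteq> []" "hd (u # p) = u" by auto
    show "last (u # p) = v" using p by (auto simp: walk_betw_def)
    fix i assume i: "Suc i < length (u # p)"
    show "E ((u # p) ! i) ((u # p) ! Suc i)"
    proof (cases i)
      case 0
      then show ?thesis using p b by (cases p) (auto simp: walk_betw_def)
    next
      case (Suc j)
      then show ?thesis using p i by (simp add: walk_betw_def)
    qed
  qed
  then show ?case using p b by auto
qed

lemma gdist_eqI:
  assumes "\<And>a b. E a b \<Longrightarrow> f a \<le> f b + 1" "f v = (0::nat)"
    and "\<And>a. a \<in> V \<Longrightarrow> f a \<noteq> 0 \<Longrightarrow> \<exists>b\<in>V. E a b \<and> f b + 1 = f a"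
    and "\<And>a. a \<in> V \<Longrightarrow> f a = (0::nat) \<Longrightarrow> a = v"
    and "u \<in> V"
  shows "gdist E u v = f u"
  unfolding gdist_def
proof (rule Least_equality)
  show "\<exists>p. walk_betw E u p v \<and> length p = Suc (f u)"
    using walk_exists[OF assms(3,4,5)] .
  fix k assume "\<exists>p. walk_betw E u p v \<and> length p = Suc k"
  then obtain p where "walk_betw E u p v" "length p = Suc k" by blast
  then show "f u \<le> k" using walk_lower[where E=E and f=f and v=v] assms(1,2) by fastforce
qed

lemma F_pos: "F c t a x (Suc d) y > 0"
  by simp

lemma D_zero:
  assumes "u \<in> pc_verts n" "v \<in> pc_verts n" "D c t u v = 0"
  shows "u = v"
proof -
  obtain a x b y where u: "u = (a, x)" and v: "v = (b, y)" by (cases u, cases v)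
  have xy: "x < 6" "y < 6" using assms(1,2) u v by (auto simp: pc_verts_def)
  have ab: "a = b"
  proof (rule ccontr)
    assume "a \<noteq> b"
    then consider "a < b" | "b < a" by linarith
    then show False
    proof cases
      case 1
      then have "b - a = Suc (b - a - 1)" by simp
      then show False using assms(3) u v 1 by (simp add: D_def del: F.simps) (metis F_pos less_numeral_extra(3))
    next
      case 2
      then have "a - b = Suc (a - b - 1)" by simp
      then show False using assms(3) u v 2 by (simp add: D_def del: F.simps) (metis F_pos less_numeral_extra(3))
    qed
  qed
  then have "hex_dist x y = 0" using assms(3) u v xy by (simp add: D_def hd6_lt)
  then have "x = y" using hex_zero xy by blast
  then show ?thesis using u v ab by simp
qed

lemma D_nbr:
  assumes valid: "pc_valid n c t" and uV: "u \<in> pc_verts n" and vV: "v \<in> pc_verts n"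
    and nz: "D c t u v \<noteq> 0"
  shows "\<exists>w\<in>pc_verts n. pc_edge n c t u w \<and> D c t w v + 1 = D c t u v"
proof -
  obtain a x b y where u: "u = (a, x)" and v: "v = (b, y)" by (cases u, cases v)
  have xy: "x < 6" "y < 6" "a < n" "b < n" using uV vV u v by (auto simp: pc_verts_def)
  have ct: "\<And>k. 1 \<le> k \<Longrightarrow> k < n \<Longrightarrow> c k < 6 \<and> t k < 6" using valid by (auto simp: pc_valid_def)
  have ring: "pc_edge n c t (a, x) (a, x')" if "x' < 6" "x' = (x+1) mod 6 \<or> x = (x'+1) mod 6" for x'
    using that xy unfolding pc_edge_def pc_verts_def by auto
  consider "a = b" | "a < b" | "b < a" by linarith
  then show ?thesis
  proof cases
    case 1
    have "x \<noteq> y" using nz u v 1 by (auto simp: D_def)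
    then obtain x' where x': "x' < 6" "x' = (x+1) mod 6 \<or> x = (x'+1) mod 6" "hd6 x' y + 1 = hd6 x y"
      using hex_step xy by blast
    show ?thesis
      by (rule bexI[of _ "(a, x')"]) (use x' ring[OF x'(1,2)] u v 1 xy in \<open>auto simp: D_def pc_verts_def\<close>)
  next
    case 2
    define T where "T = t (Suc a)"
    have T6: "T < 6" "c (Suc a) < 6" using ct[of "Suc a"] 2 xy by (auto simp: T_def)
    have e: "b - a = Suc (b - Suc a)" using 2 by simp
    have Du: "D c t u v = hd6 x T + 1 + F c t (Suc a) (c (Suc a)) (b - Suc a) y"
      using u v 2 e by (simp add: D_def F_first T_def del: F.simps)
    show ?thesis
    proof (cases "x = T")
      case True
      have ed: "pc_edge n c t u (Suc a, c (Suc a))"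
        unfolding pc_edge_def using u True T_def uV T6 2 xy
        by (auto simp: pc_verts_def intro!: exI[of _ "Suc a"])
      have "D c t (Suc a, c (Suc a)) v = F c t (Suc a) (c (Suc a)) (b - Suc a) y"
        using v 2 by (simp add: D_def)
      then show ?thesis using ed Du True T6 2 xy by (intro bexI[of _ "(Suc a, c (Suc a))"]) (auto simp: pc_verts_def)
    next
      case False
      then obtain x' where x': "x' < 6" "x' = (x+1) mod 6 \<or> x = (x'+1) mod 6" "hd6 x' T + 1 = hd6 x T"
        using hex_step xy T6 by blast
      have "D c t (a, x') v = hd6 x' T + 1 + F c t (Suc a) (c (Suc a)) (b - Suc a) y"
        using v 2 e by (simp add: D_def F_first T_def del: F.simps)
      then show ?thesis using x' ring[OF x'(1,2)] u Du xy
        by (intro bexI[of _ "(a, x')"]) (auto simp: pc_verts_def)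
    qed
  next
    case 3
    define C where "C = c a"
    have C6: "C < 6" "t a < 6" using ct[of a] 3 xy by (auto simp: C_def)
    have e: "a - b = Suc (a - Suc b)" "b + Suc (a - Suc b) = a" "\<not> a \<le> b" using 3 by auto
    have Du: "D c t u v = F c t b y (a - Suc b) (t a) + 1 + hd6 C x"
    proof -
      have "D c t u v = F c t b y (Suc (a - Suc b)) x"
        using u v 3 e by (simp add: D_def del: F.simps)
      also have "\<dots> = F c t b y (a - Suc b) (t a) + 1 + hd6 C x"
        using e by (simp add: C_def)
      finally show ?thesis .
    qed
    show ?thesis
    proof (cases "x = C")
      case True
      obtain a' where a': "a = Suc a'" using 3 by (cases a) auto
      have ed: "pc_edge n c t u (a - 1, t a)"
        unfolding pc_edge_def using u True C_def uV C6 3 xy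
        by (auto simp: pc_verts_def intro!: exI[of _ a])
      have "D c t (a - 1, t a) v = F c t b y (a - Suc b) (t a)"
      proof (cases "a' = b")
        case True
        then show ?thesis using v a' by (simp add: D_def hd6_sym)
      next
        case False
        then show ?thesis using v a' 3 by (simp add: D_def)
      qed
      then show ?thesis using ed Du True C6 3 xy
        by (intro bexI[of _ "(a - 1, t a)"]) (auto simp: pc_verts_def)
    next
      case False
      then obtain x' where x': "x' < 6" "x' = (x+1) mod 6 \<or> x = (x'+1) mod 6" "hd6 x' C + 1 = hd6 x C"
        using hex_step xy C6 by blast
      have "D c t (a, x') v = F c t b y (a - Suc b) (t a) + 1 + hd6 C x'"
      proof -
        have "D c t (a, x') v = F c t b y (Suc (a - Suc b)) x'"
          using v 3 e by (simp add: D_def del: F.simps)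
        also have "\<dots> = F c t b y (a - Suc b) (t a) + 1 + hd6 C x'"
          using e by (simp add: C_def)
        finally show ?thesis .
      qed
      then show ?thesis using x' ring[OF x'(1,2)] u Du xy hd6_sym[of x' C] hd6_sym[of x C]
        by (intro bexI[of _ "(a, x')"]) (auto simp: pc_verts_def)
    qed
  qed
qed

lemma gdist_D:
  assumes "pc_valid n c t" "u \<in> pc_verts n" "v \<in> pc_verts n"
  shows "gdist (pc_edge n c t) u v = D c t u v"
  by (rule gdist_eqI[where V="pc_verts n"])
     (use assms edge_lip D_nbr D_zero in auto)

lemma pc_verts_eq: "pc_verts n = {..<n} \<times> {..<6}"
  by (auto simp: pc_verts_def)

definition Tm :: "(nat \<Rightarrow> nat) \<Rightarrow> (nat \<Rightarrow> nat) \<Rightarrow> nat \<Rightarrow> nat" where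
  "Tm c t m = (\<Sum>a<m. \<Sum>x<6. \<Sum>b<m. \<Sum>y<6. D c t (a, x) (b, y))"

definition sig :: "(nat \<Rightarrow> nat) \<Rightarrow> (nat \<Rightarrow> nat) \<Rightarrow> nat \<Rightarrow> nat" where
  "sig c t m = (\<Sum>a<m. \<Sum>x<6. D c t (a, x) (m - 1, t m))"

lemma wiener_Tm:
  assumes "pc_valid n c t"
  shows "wiener (pc_verts n) (pc_edge n c t) = Tm c t n div 2"
proof -
  let ?V = "pc_verts n"
  let ?P = "{(u, v). u \<in> ?V \<and> v \<in> ?V \<and> u \<noteq> v}"
  have fin: "finite (?V \<times> ?V)" by (simp add: pc_verts_eq)
  have "(\<Sum>(u, v)\<in>?P. gdist (pc_edge n c t) u v) = (\<Sum>(u, v)\<in>?P. D c t u v)"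
    by (rule sum.cong) (auto simp: gdist_D[OF assms])
  also have "\<dots> = (\<Sum>(u, v)\<in>?V \<times> ?V. D c t u v)"
    by (rule sum.mono_neutral_left) (use fin in auto)
  also have "\<dots> = (\<Sum>u\<in>?V. \<Sum>v\<in>?V. D c t u v)"
    by (rule sum.cartesian_product[symmetric])
  also have "\<dots> = Tm c t n"
  proof -
    have cp: "\<And>g. (\<Sum>u\<in>{..<n} \<times> {..<6}. g u) = (\<Sum>a<n. \<Sum>x<(6::nat). g (a, x))"
      by (simp add: sum.cartesian_product)
    show ?thesis unfolding Tm_def pc_verts_eq by (simp only: cp)
  qed
  finally show ?thesis unfolding wiener_def by simp
qed

lemma D_step:
  assumes "a < m"
  shows "D c t (a, x) (m, y) = D c t (a, x) (m - 1, t m) + 1 + hd6 (c m) y"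
proof -
  have e: "m - a = Suc (m - 1 - a)" "a + Suc (m - 1 - a) = m" "a \<le> m" "a \<le> m - 1" using assms by auto
  have "D c t (a, x) (m, y) = F c t a x (Suc (m - 1 - a)) y"
    unfolding D_def using e by (simp del: F.simps)
  also have "\<dots> = F c t a x (m - 1 - a) (t m) + 1 + hd6 (c m) y"
    using e by simp
  also have "F c t a x (m - 1 - a) (t m) = D c t (a, x) (m - 1, t m)"
    using e by (simp add: D_def)
  finally show ?thesis .
qed

lemma sum2_const: "(\<Sum>a<m. \<Sum>x<(6::nat). g a x + (k::nat)) = (\<Sum>a<m. \<Sum>x<6. g a x) + 6 * m * k"
  by (simp add: sum.distrib)

lemma inner6: "(\<Sum>y<(6::nat). A + 1 + hd6 z y) = 6 * A + 15"
proof -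
  have "(\<Sum>y<(6::nat). A + 1 + hd6 z y) = (\<Sum>y<(6::nat). A + 1) + (\<Sum>y<(6::nat). hd6 z y)"
    by (rule sum.distrib)
  then show ?thesis by (simp add: hd6_sum)
qed

lemma sum6_hd: "(\<Sum>x<6. hd6 x z) = 9"
  using hd6_sum[of z] by (simp add: hd6_sym)

lemma sig_1: "sig c t 1 = 9"
  by (simp add: sig_def D_def sum6_hd lessThan_Suc)

lemma sig_Suc:
  assumes "1 \<le> m"
  shows "sig c t (Suc m) = sig c t m + 6 * m * (1 + hd6 (c m) (t (Suc m))) + 9"
proof -
  let ?h = "hd6 (c m) (t (Suc m))"
  have "sig c t (Suc m) = (\<Sum>a<m. \<Sum>x<6. D c t (a, x) (m, t (Suc m))) + (\<Sum>x<6. D c t (m, x) (m, t (Suc m)))"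
    by (simp add: sig_def)
  also have "(\<Sum>x<6. D c t (m, x) (m, t (Suc m))) = 9"
    by (simp add: D_def sum6_hd)
  also have "(\<Sum>a<m. \<Sum>x<6. D c t (a, x) (m, t (Suc m))) = (\<Sum>a<m. \<Sum>x<6. D c t (a, x) (m - 1, t m) + (1 + ?h))"
    by (intro sum.cong refl) (simp add: D_step)
  also have "\<dots> = sig c t m + 6 * m * (1 + ?h)"
    unfolding sum2_const sig_def ..
  finally show ?thesis by simp
qed

lemma Tm_1: "Tm c t 1 = 54"
proof -
  have "Tm c t 1 = (\<Sum>x<6. \<Sum>y<6. hd6 x y)" by (simp add: Tm_def D_def lessThan_Suc)
  also have "\<dots> = 54" by (simp add: hd6_sum)
  finally show ?thesis .
qed

lemma Tm_Suc:
  assumes "1 \<le> m"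
  shows "Tm c t (Suc m) = Tm c t m + 12 * sig c t m + 180 * m + 54"
proof -
  define C where "C = (\<Sum>a<m. \<Sum>x<6. \<Sum>y<6. D c t (a, x) (m, y))"
  have C': "(\<Sum>x<6. \<Sum>b<m. \<Sum>y<6. D c t (m, x) (b, y)) = C"
  proof -
    have "(\<Sum>x<6. \<Sum>b<m. \<Sum>y<6. D c t (m, x) (b, y)) = (\<Sum>x<6. \<Sum>b<m. \<Sum>y<6. D c t (b, y) (m, x))"
      by (simp add: D_sym)
    also have "\<dots> = (\<Sum>b<m. \<Sum>x<6. \<Sum>y<6. D c t (b, y) (m, x))"
      by (rule sum.swap)
    also have "\<dots> = (\<Sum>b<m. \<Sum>y<6. \<Sum>x<6. D c t (b, y) (m, x))"
      by (rule sum.cong[OF refl], rule sum.swap)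
    finally show ?thesis unfolding C_def .
  qed
  have H: "(\<Sum>x<6. \<Sum>y<6. D c t (m, x) (m, y)) = 54"
    by (simp add: D_def hd6_sum)
  have "Tm c t (Suc m) = Tm c t m + C + (\<Sum>x<6. \<Sum>b<m. \<Sum>y<6. D c t (m, x) (b, y))
          + (\<Sum>x<6. \<Sum>y<6. D c t (m, x) (m, y))"
    by (simp add: Tm_def C_def sum.distrib)
  also have "\<dots> = Tm c t m + 2 * C + 54" using C' H by simp
  also have "C = (\<Sum>a<m. \<Sum>x<6. \<Sum>y<6. D c t (a, x) (m - 1, t m) + 1 + hd6 (c m) y)"
    unfolding C_def by (intro sum.cong refl) (simp add: D_step)
  also have "\<dots> = (\<Sum>a<m. \<Sum>x<6. 6 * D c t (a, x) (m - 1, t m) + 15)"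
    by (intro sum.cong refl) (rule inner6)
  also have "\<dots> = 6 * sig c t m + 90 * m"
    unfolding sum2_const sig_def by (simp add: sum_distrib_left)
  finally show ?thesis by simp
qed

lemma gt_Suc:
  assumes "pc_valid n c t" "1 \<le> m" "Suc m < n"
  shows "gt c t (Suc m) = 9 + 6 * m * (1 + hd6 (c m) (t (Suc m)))"
proof -
  have v: "c m < 6" "t (Suc m) < 6"
    using assms unfolding pc_valid_def by auto
  have all: "\<forall>k. 2 \<le> k \<and> k < n \<longrightarrow> t k \<noteq> c (k - 1)" using assms(1) unfolding pc_valid_def by blast
  have "t (Suc m) \<noteq> c (Suc m - 1)" using spec[OF all, of "Suc m"] assms(2,3) by simp
  then have v3: "t (Suc m) \<noteq> c m" by simp
  have h: "hd6 (c m) (t (Suc m)) = hex_dist (c m) (t (Suc m))" using v by (simp add: hd6_lt)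
  from hex_123[OF v(1,2)] v3 have "hex_dist (c m) (t (Suc m)) = 1 \<or> hex_dist (c m) (t (Suc m)) = 2 \<or> hex_dist (c m) (t (Suc m)) = 3"
    by metis
  then show ?thesis using assms(2) h
    by (auto simp: gt_def is_ortho_def is_meta_def is_para_def)
qed

lemma sig_gt:
  assumes "pc_valid n c t" "1 \<le> m" "m < n"
  shows "sig c t m = (\<Sum>i = 1..m. gt c t i)"
  using assms(2,3)
proof (induction m rule: dec_induct)
  case base
  have "sig c t 1 = 9" by (rule sig_1)
  then show ?case by (simp add: gt_def)
next
  case (step m)
  then show ?case using sig_Suc[OF step(1)] gt_Suc[OF assms(1) step(1)] by simp
qed

lemma Tm_formula:
  assumes "pc_valid n c t"
  shows "1 \<le> m \<Longrightarrow> m \<le> n \<Longrightarrow> Tm c t m + 36 * m = 12 * (\<Sum>k = 1..m - 1. \<Sum>i = 1..k. gt c t i) + 90 * m\<^sup>2"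
proof (induction m)
  case 0
  then show ?case by simp
next
  case (Suc m)
  show ?case
  proof (cases "m = 0")
    case True
    have "Tm c t 1 = 54" by (rule Tm_1)
    then show ?thesis using True by simp
  next
    case False
    then have m1: "1 \<le> m" and mn: "m < n" using Suc.prems by auto
    have IH: "Tm c t m + 36 * m = 12 * (\<Sum>k = 1..m - 1. \<Sum>i = 1..k. gt c t i) + 90 * m\<^sup>2"
      using Suc.IH m1 mn by simp
    have s: "sig c t m = (\<Sum>i = 1..m. gt c t i)" using sig_gt[OF assms m1 mn] .
    have q: "(\<Sum>k = 1..Suc m - 1. \<Sum>i = 1..k. gt c t i) = (\<Sum>k = 1..m - 1. \<Sum>i = 1..k. gt c t i) + (\<Sum>i = 1..m. gt c t i)"
      using m1 by (cases m) auto
    have ts: "Tm c t (Suc m) = Tm c t m + 12 * sig c t m + 180 * m + 54" by (rule Tm_Suc[OF m1])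
    have "Tm c t (Suc m) + 36 * Suc m = Tm c t m + 36 * m + 12 * sig c t m + 180 * m + 90"
      unfolding ts by simp
    also have "\<dots> = 12 * (\<Sum>k = 1..Suc m - 1. \<Sum>i = 1..k. gt c t i) + 90 * (Suc m)\<^sup>2"
      using IH s q by (simp add: power2_eq_square algebra_simps)
    finally show ?thesis .
  qed
qed

lemma double_sum_swap:
  "(\<Sum>k = 1..m. \<Sum>i = 1..k. f i) = (\<Sum>k = 1..m. (Suc m - k) * (f k :: nat))"
proof (induction m)
  case 0
  then show ?case by simp
next
  case (Suc m)
  have "(\<Sum>k = 1..m. (Suc (Suc m) - k) * f k) = (\<Sum>k = 1..m. (Suc m - k) * f k + f k)"
    by (rule sum.cong) (auto simp: Suc_diff_le)
  then have "(\<Sum>k = 1..m. (Suc m - k) * f k) + (\<Sum>k = 1..m. f k) = (\<Sum>k = 1..m. (Suc (Suc m) - k) * f k)"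
    by (simp add: sum.distrib)
  then show ?case using Suc by simp
qed

theorem theorem3p2:
  fixes n :: nat and c t :: "nat \<Rightarrow> nat"
  assumes "n \<ge> 1" and "pc_valid n c t"
  shows "wiener (pc_verts n) (pc_edge n c t)
           = 6 * (\<Sum>k = 1..n - 1. \<Sum>i = 1..k. gt c t i) + 45 * n\<^sup>2 - 18 * n
       \<and> 6 * (\<Sum>k = 1..n - 1. \<Sum>i = 1..k. gt c t i) + 45 * n\<^sup>2 - 18 * n
           = 6 * (\<Sum>k = 1..n - 1. (n - k) * gt c t k) + 45 * n\<^sup>2 - 18 * n"
proof -
  let ?Q = "\<Sum>k = 1..n - 1. \<Sum>i = 1..k. gt c t i"
  have W: "wiener (pc_verts n) (pc_edge n c t) = Tm c t n div 2" by (rule wiener_Tm[OF assms(2)])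
  have F: "Tm c t n + 36 * n = 12 * ?Q + 90 * n\<^sup>2" by (rule Tm_formula[OF assms(2) assms(1) le_refl])
  have nn: "n \<le> n\<^sup>2" using assms(1) by (simp add: power2_eq_square)
  then have "Tm c t n = 2 * (6 * ?Q + 45 * n\<^sup>2 - 18 * n)" using F by linarith
  then have 1: "wiener (pc_verts n) (pc_edge n c t) = 6 * ?Q + 45 * n\<^sup>2 - 18 * n" using W by simp
  have "?Q = (\<Sum>k = 1..n - 1. (Suc (n - 1) - k) * gt c t k)" by (rule double_sum_swap)
  then have 2: "?Q = (\<Sum>k = 1..n - 1. (n - k) * gt c t k)" using assms(1) by simp
  show ?thesis using 1 2 by simp
qed

end
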